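(* Let $G\in\mathcal{G}(\widehat{C}_6,\widehat{C}_7)$, let $x\in V(G)$, let $A$ be a connected component of $G[N_2(x)]$ not belonging to $A^*$, and let $a\in V(A)$ have a neighbour in $A$. Suppose $N(a)\cap D=\{v_1,\dots,v_k\}$ with $k>2$. Then $N(\{v_1,\dots,v_k\})\cap N_2(x)=\{a\}$.
   Context: All graphs are finite, simple and undirected. $\mathcal{G}(\widehat{C}_6,\widehat{C}_7)$ is the family of graphs with no subgraph (not necessarily induced) isomorphic to $C_6$ or $C_7$. For a vertex set $S$, $N_i(S)$ is the set of vertices at distance exactly $i$ from $S$, $N(S)=N_1(S)$, $N[S]=S\cup N(S)$, $N(v)=N(\{v\})$, $N_2(v)=N_2(\{v\})$ (all in $G$). $A^*$ is the set of connected components $A$ of $G[N_2(x)]$ for which there exists a vertex $a\in V(A)$ with $N(x)\cap N(a)=N(x)\cap N(V(A))$; $V(A^* )$ is the union of their vertex sets; and $D=N(x)\setminus N(V(A^* ))$ (the vertices of $N(x)$ having no neighbour in a component of $A^*$). *)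

theory Defs
  imports Main
begin

definition simple_graph :: "'a set \<Rightarrow> ('a \<Rightarrow> 'a \<Rightarrow> bool) \<Rightarrow> bool" where
  "simple_graph V E \<longleftrightarrow> finite V \<and> (\<forall>u v. E u v \<longrightarrow> u \<in> V \<and> v \<in> V)
     \<and> (\<forall>u v. E u v \<longrightarrow> E v u) \<and> (\<forall>v. \<not> E v v)"

definition has_cycle_subgraph :: "'a set \<Rightarrow> ('a \<Rightarrow> 'a \<Rightarrow> bool) \<Rightarrow> nat \<Rightarrow> bool" where
  "has_cycle_subgraph V E k \<longleftrightarrow> (\<exists>f :: nat \<Rightarrow> 'a. inj_on f {0..<k} \<and> f ` {0..<k} \<subseteq> V
     \<and> (\<forall>i<k. E (f i) (f (Suc i mod k))))"

definition no_C6_C7 :: "'a set \<Rightarrow> ('a \<Rightarrow> 'a \<Rightarrow> bool) \<Rightarrow> bool" where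
  "no_C6_C7 V E \<longleftrightarrow> \<not> has_cycle_subgraph V E 6 \<and> \<not> has_cycle_subgraph V E 7"

inductive walk_len :: "('a \<Rightarrow> 'a \<Rightarrow> bool) \<Rightarrow> 'a \<Rightarrow> nat \<Rightarrow> 'a \<Rightarrow> bool" for E where
  wl0: "walk_len E u 0 u"
| wlS: "E u w \<Longrightarrow> walk_len E w n v \<Longrightarrow> walk_len E u (Suc n) v"

definition dist_set_eq :: "('a \<Rightarrow> 'a \<Rightarrow> bool) \<Rightarrow> 'a set \<Rightarrow> 'a \<Rightarrow> nat \<Rightarrow> bool" where
  "dist_set_eq E S v i \<longleftrightarrow> (\<exists>s\<in>S. walk_len E s i v) \<and> (\<forall>j<i. \<forall>s\<in>S. \<not> walk_len E s j v)"

definition Ni :: "'a set \<Rightarrow> ('a \<Rightarrow> 'a \<Rightarrow> bool) \<Rightarrow> nat \<Rightarrow> 'a set \<Rightarrow> 'a set" where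
  "Ni V E i S = {v \<in> V. dist_set_eq E S v i}"

abbreviation NS :: "'a set \<Rightarrow> ('a \<Rightarrow> 'a \<Rightarrow> bool) \<Rightarrow> 'a set \<Rightarrow> 'a set" where
  "NS V E S \<equiv> Ni V E 1 S"

abbreviation Nv :: "'a set \<Rightarrow> ('a \<Rightarrow> 'a \<Rightarrow> bool) \<Rightarrow> 'a \<Rightarrow> 'a set" where
  "Nv V E v \<equiv> Ni V E 1 {v}"

abbreviation N2v :: "'a set \<Rightarrow> ('a \<Rightarrow> 'a \<Rightarrow> bool) \<Rightarrow> 'a \<Rightarrow> 'a set" where
  "N2v V E v \<equiv> Ni V E 2 {v}"

definition components :: "('a \<Rightarrow> 'a \<Rightarrow> bool) \<Rightarrow> 'a set \<Rightarrow> 'a set set" where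
  "components E W = {{v \<in> W. (\<lambda>p q. p \<in> W \<and> q \<in> W \<and> E p q)\<^sup>*\<^sup>* a v} | a. a \<in> W}"

definition Astar :: "'a set \<Rightarrow> ('a \<Rightarrow> 'a \<Rightarrow> bool) \<Rightarrow> 'a \<Rightarrow> 'a set set" where
  "Astar V E x = {A \<in> components E (N2v V E x).
      \<exists>a\<in>A. Nv V E x \<inter> Nv V E a = Nv V E x \<inter> NS V E A}"

definition Dset :: "'a set \<Rightarrow> ('a \<Rightarrow> 'a \<Rightarrow> bool) \<Rightarrow> 'a \<Rightarrow> 'a set" where
  "Dset V E x = Nv V E x - NS V E (\<Union> (Astar V E x))"

end

theory Submission
  imports Defs
begin

lemma walk0: "walk_len E u 0 v \<longleftrightarrow> u = v"
  by (auto elim: walk_len.cases intro: walk_len.intros)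

lemma walkSuc: "walk_len E u (Suc n) v \<longleftrightarrow> (\<exists>w. E u w \<and> walk_len E w n v)"
  by (auto elim: walk_len.cases intro: walk_len.intros)

lemma NS_iff: "u \<in> NS V E T \<longleftrightarrow> u \<in> V \<and> u \<notin> T \<and> (\<exists>s\<in>T. E s u)"
  unfolding Ni_def dist_set_eq_def by (auto simp: walkSuc walk0)

lemma NS_iff': "u \<in> Ni V E (Suc 0) T \<longleftrightarrow> u \<in> V \<and> u \<notin> T \<and> (\<exists>s\<in>T. E s u)"
  using NS_iff by simp

lemma N2_iff: "u \<in> N2v V E x \<longleftrightarrow> u \<in> V \<and> u \<noteq> x \<and> \<not> E x u \<and> (\<exists>m. E x m \<and> E m u)"
  unfolding Ni_def dist_set_eq_def numeral_2_eq_2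
  by (auto simp: walkSuc walk0 less_Suc_eq)

lemma cyc_list:
  assumes "distinct l" "set l \<subseteq> V" "length l = k" "\<forall>i<k. E (l ! i) (l ! (Suc i mod k))"
  shows "has_cycle_subgraph V E k"
  unfolding has_cycle_subgraph_def
proof (intro exI conjI)
  show "inj_on (\<lambda>i. l ! i) {0..<k}" using assms(1,3) by (intro inj_on_nth) auto
  show "(\<lambda>i. l ! i) ` {0..<k} \<subseteq> V"
  proof
    fix y assume "y \<in> (\<lambda>i. l ! i) ` {0..<k}"
    then obtain i where "i < length l" "y = l ! i" using assms(3) by auto
    thus "y \<in> V" using nth_mem assms(2) by blast
  qed
  show "\<forall>i<k. E (l ! i) (l ! (Suc i mod k))" by fact
qed

lemma cyc6:
  assumes "distinct [a0,a1,a2,a3,a4,a5]" "set [a0,a1,a2,a3,a4,a5] \<subseteq> V"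
    "E a0 a1" "E a1 a2" "E a2 a3" "E a3 a4" "E a4 a5" "E a5 a0"
  shows "has_cycle_subgraph V E 6"
proof (rule cyc_list[OF assms(1,2)])
  show "\<forall>i<6. E ([a0,a1,a2,a3,a4,a5] ! i) ([a0,a1,a2,a3,a4,a5] ! (Suc i mod 6))"
  proof (intro allI impI)
    fix i :: nat assume "i < 6"
    hence "i = 0 \<or> i = 1 \<or> i = 2 \<or> i = 3 \<or> i = 4 \<or> i = 5" by linarith
    thus "E ([a0,a1,a2,a3,a4,a5] ! i) ([a0,a1,a2,a3,a4,a5] ! (Suc i mod 6))" using assms(3-) by (elim disjE) simp_all
  qed
qed simp

lemma cyc7:
  assumes "distinct [a0,a1,a2,a3,a4,a5,a6]" "set [a0,a1,a2,a3,a4,a5,a6] \<subseteq> V"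
    "E a0 a1" "E a1 a2" "E a2 a3" "E a3 a4" "E a4 a5" "E a5 a6" "E a6 a0"
  shows "has_cycle_subgraph V E 7"
proof (rule cyc_list[OF assms(1,2)])
  show "\<forall>i<7. E ([a0,a1,a2,a3,a4,a5,a6] ! i) ([a0,a1,a2,a3,a4,a5,a6] ! (Suc i mod 7))"
  proof (intro allI impI)
    fix i :: nat assume "i < 7"
    hence "i = 0 \<or> i = 1 \<or> i = 2 \<or> i = 3 \<or> i = 4 \<or> i = 5 \<or> i = 6" by linarith
    thus "E ([a0,a1,a2,a3,a4,a5,a6] ! i) ([a0,a1,a2,a3,a4,a5,a6] ! (Suc i mod 7))" using assms(3-) by (elim disjE) simp_all
  qed
qed simp

lemma three_elems:
  assumes "card S > 2"
  shows "\<exists>v\<in>S. v \<noteq> s \<and> v \<noteq> t"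
proof (rule ccontr)
  assume "\<not> ?thesis"
  hence "S \<subseteq> {s, t}" by auto
  hence "card S \<le> card {s,t}" by (simp add: card_mono)
  also have "\<dots> \<le> 2" by (simp add: card_insert_le_m1)
  finally show False using assms by simp
qed

lemma rtranclp_sym:
  assumes "\<And>u v. R u v \<Longrightarrow> R v u" "R\<^sup>*\<^sup>* x y"
  shows "R\<^sup>*\<^sup>* y x"
  using assms(2)
proof (induction rule: rtranclp_induct)
  case base thus ?case by simp
next
  case (step y z)
  have "R z y" using assms(1) step(2) .
  thus ?case using step(3) by (rule converse_rtranclp_into_rtranclp)
qed

lemma comp_eq:
  assumes "A \<in> components E W" "a \<in> A" "\<And>u v. E u v \<Longrightarrow> E v u"
  shows "A = {v \<in> W. (\<lambda>p q. p \<in> W \<and> q \<in> W \<and> E p q)\<^sup>*\<^sup>* a v}"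
proof -
  let ?R = "\<lambda>p q. p \<in> W \<and> q \<in> W \<and> E p q"
  have symR: "\<And>u v. ?R u v \<Longrightarrow> ?R v u" using assms(3) by blast
  obtain a0 where A: "A = {v \<in> W. ?R\<^sup>*\<^sup>* a0 v}" using assms(1) unfolding components_def by auto
  hence ra: "?R\<^sup>*\<^sup>* a0 a" using assms(2) by auto
  have ar: "?R\<^sup>*\<^sup>* a a0" by (rule rtranclp_sym[OF symR ra])
  show ?thesis
  proof (rule set_eqI, rule iffI)
    fix v assume "v \<in> A"
    hence "v \<in> W" "?R\<^sup>*\<^sup>* a0 v" using A by auto
    thus "v \<in> {v \<in> W. ?R\<^sup>*\<^sup>* a v}" using rtranclp_trans[OF ar] by blast
  next
    fix v assume "v \<in> {v \<in> W. ?R\<^sup>*\<^sup>* a v}"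
    hence "v \<in> W" "?R\<^sup>*\<^sup>* a v" by auto
    thus "v \<in> A" using A rtranclp_trans[OF ra] by blast
  qed
qed

theorem lemma2p10:
  fixes V :: "'a set" and E :: "'a \<Rightarrow> 'a \<Rightarrow> bool" and x a :: 'a and A :: "'a set"
  assumes "simple_graph V E"
    and "no_C6_C7 V E"
    and "x \<in> V"
    and "A \<in> components E (N2v V E x)"
    and "A \<notin> Astar V E x"
    and "a \<in> A"
    and "\<exists>b\<in>A. E a b"
    and "card (Nv V E a \<inter> Dset V E x) > 2"
  shows "NS V E (Nv V E a \<inter> Dset V E x) \<inter> N2v V E x = {a}"
proof -
  let ?N = "Nv V E x" and ?N2 = "N2v V E x" and ?S = "Nv V E a \<inter> Dset V E x"
  let ?R = "\<lambda>p q. p \<in> ?N2 \<and> q \<in> ?N2 \<and> E p q"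
  have sym: "\<And>u v. E u v \<Longrightarrow> E v u" and inV: "\<And>u v. E u v \<Longrightarrow> u \<in> V \<and> v \<in> V"
    and irr: "\<And>v. \<not> E v v"
    using assms(1) unfolding simple_graph_def by auto
  have no6: "\<not> has_cycle_subgraph V E 6" and no7: "\<not> has_cycle_subgraph V E 7"
    using assms(2) unfolding no_C6_C7_def by auto
  have Nv_iff: "\<And>u v. u \<in> Nv V E v \<longleftrightarrow> u \<in> V \<and> E v u"
    using irr by (auto simp: NS_iff NS_iff')
  have Nv_iff': "\<And>u v. u \<in> Ni V E (Suc 0) {v} \<longleftrightarrow> u \<in> V \<and> E v u"
    using Nv_iff by simp
  have S_iff: "\<And>v. v \<in> ?S \<longleftrightarrow> v \<in> V \<and> E a v \<and> E x v \<and> v \<notin> NS V E (\<Union> (Astar V E x))"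
    by (auto simp: Dset_def Nv_iff Nv_iff')
  have ex2: "\<And>s t. \<exists>v\<in>?S. v \<noteq> s \<and> v \<noteq> t" by (rule three_elems[OF assms(8)])
  have AN2: "A \<subseteq> ?N2" using assms(4) unfolding components_def by auto
  have Acomp: "A = {v \<in> ?N2. ?R\<^sup>*\<^sup>* a v}" by (rule comp_eq[OF assms(4) assms(6) sym])
  have aN2: "a \<in> ?N2" using AN2 assms(6) by auto
  have SD: "v \<in> V \<and> E a v \<and> E v a \<and> E x v \<and> E v x" if "v \<in> ?S" for v
  proof -
    have "v \<in> V" "E a v" "E x v" using that S_iff by auto
    thus ?thesis using sym by blast
  qed
  have N2D: "u \<in> V \<and> u \<noteq> x \<and> \<not> E x u \<and> \<not> E u x" if "u \<in> ?N2" for u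
  proof -
    have "u \<in> V" "u \<noteq> x" "\<not> E x u" using that unfolding N2_iff by auto
    thus ?thesis using sym by blast
  qed
  have N2E: "\<exists>t. t \<in> V \<and> E x t \<and> E t u \<and> E u t \<and> E t x" if uN: "u \<in> ?N2" for u
  proof -
    obtain t where "E x t" "E t u" using uN unfolding N2_iff by auto
    thus ?thesis using sym inV by blast
  qed
  have aD: "a \<in> V" "a \<noteq> x" "\<not> E x a" "\<not> E a x" using N2D[OF aN2] by auto
  have xV: "x \<in> V" by fact
  have star: False if q: "q1 \<in> ?N2" "q2 \<in> ?N2" "q1 \<noteq> a" "q2 \<noteq> a" "E a q1" "E q1 q2" for q1 q2
  proof -
    obtain t where t: "t \<in> V" "E x t" "E t q2" "E q2 t" "E t x" using N2E[OF q(2)] by blast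
    obtain v where v: "v \<in> ?S" "v \<noteq> t" using ex2 by blast
    note vD = SD[OF v(1)]
    note q1D = N2D[OF q(1)] and q2D = N2D[OF q(2)]
    have "has_cycle_subgraph V E 6"
      apply (rule cyc6[of a q1 q2 t x v])
      using q t v(2) vD q1D q2D aD xV irr by auto
    with no6 show False by simp
  qed
  have Astar_mem: "\<And>v. v \<in> A \<Longrightarrow> v = a \<or> E a v"
  proof -
    fix v assume "v \<in> A"
    hence "?R\<^sup>*\<^sup>* a v" using Acomp by auto
    thus "v = a \<or> E a v"
    proof (induction rule: rtranclp_induct)
      case base thus ?case by simp
    next
      case (step y z)
      show ?case
      proof (cases "y = a")
        case True thus ?thesis using step by auto
      next
        case False
        hence "E a y" using step by auto
        show ?thesis
        proof (rule ccontr)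
          assume "\<not> ?thesis"
          thus False using star[of y z] step \<open>E a y\<close> False by auto
        qed
      qed
    qed
  qed
  have W1: "u = s" if W1a: "z \<in> ?N2" "z \<noteq> a" "s \<in> ?S" "E s z" "u \<in> V" "E x u" "E z u" for z s u
  proof (rule ccontr)
    assume us: "u \<noteq> s"
    obtain v where v: "v \<in> ?S" "v \<noteq> s" "v \<noteq> u" using ex2 by blast
    note vD = SD[OF v(1)] and sD = SD[OF W1a(3)] and zD = N2D[OF W1a(1)]
    have "E u z" "E u x" "E z s" using W1a sym by auto
    have "has_cycle_subgraph V E 6"
      apply (rule cyc6[of z s a v x u])
      using W1a us v(2,3) vD sD zD aD xV irr \<open>E u z\<close> \<open>E u x\<close> \<open>E z s\<close> by auto
    with no6 show False by simp
  qed
  have W2: "E s q" if W2a: "z \<in> ?N2" "z \<noteq> a" "s \<in> ?S" "E s z" "q \<in> ?N2" "E z q" "q \<noteq> a" for z s q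
  proof -
    obtain t where t: "t \<in> V" "E x t" "E t q" "E q t" "E t x" using N2E[OF W2a(5)] by blast
    show ?thesis
    proof (cases "t = s")
      case True thus ?thesis using t by simp
    next
      case False
      obtain v where v: "v \<in> ?S" "v \<noteq> s" "v \<noteq> t" using ex2 by blast
      note vD = SD[OF v(1)] and sD = SD[OF W2a(3)] and zD = N2D[OF W2a(1)] and qD = N2D[OF W2a(5)]
      have "E a s" "E z s" using sD W2a sym by auto
      have "has_cycle_subgraph V E 7"
        apply (rule cyc7[of z q t x v a s])
        using W2a t False v(2,3) vD sD zD qD aD xV irr \<open>E a s\<close> \<open>E z s\<close> by auto
      with no7 show ?thesis by simp
    qed
  qed
  show ?thesis
  proof (rule set_eqI, rule iffI)
    fix w assume w: "w \<in> NS V E ?S \<inter> ?N2"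
    show "w \<in> {a}"
    proof (rule ccontr)
      assume wa: "w \<notin> {a}"
      from w obtain s where s: "s \<in> ?S" "E s w" by (auto simp: NS_iff NS_iff')
      have wN2: "w \<in> ?N2" using w by auto
      note sD = SD[OF s(1)] and wD = N2D[OF wN2]
      show False
      proof (cases "w \<in> A")
        case True
        hence "E a w" using Astar_mem wa by auto
        have "\<not> (\<exists>a'\<in>A. ?N \<inter> Nv V E a' = ?N \<inter> NS V E A)"
          using assms(4,5) unfolding Astar_def by auto
        hence "?N \<inter> Nv V E a \<noteq> ?N \<inter> NS V E A" using assms(6) by blast
        moreover have "?N \<inter> Nv V E a \<subseteq> ?N \<inter> NS V E A"
        proof
          fix u assume "u \<in> ?N \<inter> Nv V E a"
          hence "u \<in> ?N" "u \<in> V" "E a u" "E x u" using Nv_iff by auto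
          moreover have "u \<notin> A" using AN2 N2D[of u] \<open>E x u\<close> by blast
          ultimately show "u \<in> ?N \<inter> NS V E A" using assms(6) by (auto simp: NS_iff NS_iff')
        qed
        ultimately obtain u where u: "u \<in> ?N" "u \<in> NS V E A" "u \<notin> Nv V E a" by blast
        then obtain c where c: "c \<in> A" "E c u" by (auto simp: NS_iff NS_iff')
        have uV: "u \<in> V" "E x u" "\<not> E a u" using u Nv_iff by auto
        have "c \<noteq> a" using c uV by auto
        hence "E a c" using Astar_mem c by auto
        have cN2: "c \<in> ?N2" using c AN2 by auto
        note cD = N2D[OF cN2]
        show False
        proof (cases "c = w")
          case True
          hence "u = s" using W1[of w s u] wN2 wa s uV c by auto
          thus False using sD uV by auto
        next
          case False
          have "E w s" "E s x" "E u c" "E c a" using s sD sym c \<open>E a c\<close> by auto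
          have "has_cycle_subgraph V E 6"
            apply (rule cyc6[of x u c a w s])
            using False uV c sD \<open>E a c\<close> \<open>E a w\<close> \<open>c \<noteq> a\<close> wa wD cD aD xV irr \<open>E w s\<close> \<open>E s x\<close> \<open>E u c\<close> \<open>E c a\<close>
            by auto
          with no6 show False by simp
        qed
      next
        case False
        define Aw where "Aw = {v \<in> ?N2. ?R\<^sup>*\<^sup>* w v}"
        have Awc: "Aw \<in> components E ?N2" unfolding Aw_def components_def using wN2 by blast
        have wAw: "w \<in> Aw" unfolding Aw_def using wN2 by simp
        have aAw: "a \<notin> Aw"
        proof
          assume "a \<in> Aw"
          hence "Aw = A" using comp_eq[OF Awc \<open>a \<in> Aw\<close> sym] Acomp by simp
          thus False using False wAw by simp
        qed
        have AwN2: "Aw \<subseteq> ?N2" unfolding Aw_def by auto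
        have allS: "E s z" if "z \<in> Aw" for z
        proof -
          have "?R\<^sup>*\<^sup>* w z" using that unfolding Aw_def by auto
          thus ?thesis
          proof (induction rule: rtranclp_induct)
            case base thus ?case using s by simp
          next
            case (step y z)
            have "?R\<^sup>*\<^sup>* w z" using step(1,2) by (rule rtranclp.rtrancl_into_rtrancl)
            hence "y \<in> Aw" "z \<in> Aw" using step unfolding Aw_def by auto
            hence "y \<noteq> a" "z \<noteq> a" using aAw by auto
            thus ?case using W2[of y s z] step s by auto
          qed
        qed
        have "Aw \<in> Astar V E x"
          unfolding Astar_def
        proof (intro CollectI conjI Awc bexI[of _ w] wAw)
          show "?N \<inter> Nv V E w = ?N \<inter> NS V E Aw"
          proof (rule set_eqI, rule iffI)
            fix u assume "u \<in> ?N \<inter> Nv V E w"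
            hence "u \<in> ?N" "u \<in> V" "E w u" "E x u" using Nv_iff by auto
            moreover have "u \<notin> Aw" using AwN2 N2D[of u] \<open>E x u\<close> by blast
            ultimately show "u \<in> ?N \<inter> NS V E Aw" using wAw by (auto simp: NS_iff NS_iff')
          next
            fix u assume u: "u \<in> ?N \<inter> NS V E Aw"
            then obtain c where c: "c \<in> Aw" "E c u" by (auto simp: NS_iff NS_iff')
            have uV: "u \<in> V" "E x u" using u Nv_iff by auto
            have "c \<noteq> a" using c aAw by auto
            hence "u = s" using W1[of c s u] c AwN2 allS s uV by auto
            thus "u \<in> ?N \<inter> Nv V E w" using u s sD wD Nv_iff sym[OF s(2)] by auto
          qed
        qed
        moreover have "\<forall>B\<in>Astar V E x. B \<subseteq> ?N2" unfolding Astar_def components_def by auto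
        moreover have "s \<notin> ?N2" using sD N2D[of s] by blast
        moreover have "E w s" using sym[OF s(2)] .
        ultimately have "s \<in> NS V E (\<Union> (Astar V E x))" using wAw s sD
          unfolding NS_iff by blast
        thus False using s S_iff by auto
      qed
    qed
  next
    fix w assume "w \<in> {a}"
    hence wa: "w = a" by simp
    obtain v where v: "v \<in> ?S" using ex2 by blast
    note vD = SD[OF v]
    have "v \<noteq> a" using vD irr by auto
    have "a \<notin> ?S" using SD[of a] aD by blast
    hence "a \<in> NS V E ?S" using v vD aD by (auto simp: NS_iff NS_iff')
    thus "w \<in> NS V E ?S \<inter> ?N2" using wa aN2 by simp
  qed
qed

end
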